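(* Let $G$ be a group. If the set $\{x\in G:x^3=1\}$ is $7$-large in $G$, then $G$ is $2$-Engel, i.e. $[x,y,y]=1$ for all $x,y\in G$.
   Context: $[x,y]=x^{-1}y^{-1}xy$ and $[x,y,z]=[[x,y],z]$. A subset $X\subseteq G$ is $k$-large in $G$ if the intersection of any $k$ left translates $g_1X\cap\dots\cap g_kX$ ($g_i\in G$) is non-empty. *)

theory Defs
  imports "HOL-Algebra.Coset"
begin

definition comm :: "('a, 'b) monoid_scheme \<Rightarrow> 'a \<Rightarrow> 'a \<Rightarrow> 'a" where
  "comm G x y = inv\<^bsub>G\<^esub> x \<otimes>\<^bsub>G\<^esub> inv\<^bsub>G\<^esub> y \<otimes>\<^bsub>G\<^esub> x \<otimes>\<^bsub>G\<^esub> y"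

definition comm3 :: "('a, 'b) monoid_scheme \<Rightarrow> 'a \<Rightarrow> 'a \<Rightarrow> 'a \<Rightarrow> 'a" where
  "comm3 G x y z = comm G (comm G x y) z"

definition k_large :: "nat \<Rightarrow> ('a, 'b) monoid_scheme \<Rightarrow> 'a set \<Rightarrow> bool" where
  "k_large k G X \<longleftrightarrow>
     (\<forall>g. (\<forall>i<k. g i \<in> carrier G) \<longrightarrow> (\<Inter>i<k. g i <#\<^bsub>G\<^esub> X) \<noteq> {})"

definition two_engel :: "('a, 'b) monoid_scheme \<Rightarrow> bool" where
  "two_engel G \<longleftrightarrow> (\<forall>x\<in>carrier G. \<forall>y\<in>carrier G. comm3 G x y y = \<one>\<^bsub>G\<^esub>)"

end

theory Submission
  imports Defs
begin

context group
begin

lemma inv_cancel_l [simp]: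
  "x \<in> carrier G \<Longrightarrow> y \<in> carrier G \<Longrightarrow> inv x \<otimes> (x \<otimes> y) = y"
  by (simp add: m_assoc [symmetric])

lemma cancel_inv_l [simp]:
  "x \<in> carrier G \<Longrightarrow> y \<in> carrier G \<Longrightarrow> x \<otimes> (inv x \<otimes> y) = y"
  by (simp add: m_assoc [symmetric])

lemma cm_inv_right:
  assumes c: "a \<in> carrier G" "b \<in> carrier G" and e: "a \<otimes> b = b \<otimes> a"
  shows "a \<otimes> inv b = inv b \<otimes> a"
proof -
  have "inv b \<otimes> a = inv b \<otimes> (a \<otimes> b) \<otimes> inv b" using c by (simp add: m_assoc)
  also have "\<dots> = inv b \<otimes> (b \<otimes> a) \<otimes> inv b" using e by simp
  also have "\<dots> = a \<otimes> inv b" using c by (simp add: m_assoc)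
  finally show ?thesis by simp
qed

lemma cm_mult_right:
  assumes c: "a \<in> carrier G" "b \<in> carrier G" "c \<in> carrier G"
    and e1: "a \<otimes> b = b \<otimes> a" and e2: "a \<otimes> c = c \<otimes> a"
  shows "a \<otimes> (b \<otimes> c) = (b \<otimes> c) \<otimes> a"
proof -
  have "a \<otimes> (b \<otimes> c) = (a \<otimes> b) \<otimes> c" using c by (simp add: m_assoc)
  also have "\<dots> = (b \<otimes> a) \<otimes> c" using e1 by simp
  also have "\<dots> = b \<otimes> (a \<otimes> c)" using c by (simp add: m_assoc)
  also have "\<dots> = b \<otimes> (c \<otimes> a)" using e2 by simp
  also have "\<dots> = (b \<otimes> c) \<otimes> a" using c by (simp add: m_assoc)
  finally show ?thesis .
qed

lemma conj_comm:
  assumes c: "g \<in> carrier G" "a \<in> carrier G" "b \<in> carrier G" and e: "a \<otimes> b = b \<otimes> a"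
  shows "(g \<otimes> a \<otimes> inv g) \<otimes> (g \<otimes> b \<otimes> inv g) = (g \<otimes> b \<otimes> inv g) \<otimes> (g \<otimes> a \<otimes> inv g)"
proof -
  have "(g \<otimes> a \<otimes> inv g) \<otimes> (g \<otimes> b \<otimes> inv g) = g \<otimes> (a \<otimes> b) \<otimes> inv g"
    using c by (simp add: m_assoc)
  also have "\<dots> = g \<otimes> (b \<otimes> a) \<otimes> inv g" using e by simp
  also have "\<dots> = (g \<otimes> b \<otimes> inv g) \<otimes> (g \<otimes> a \<otimes> inv g)"
    using c by (simp add: m_assoc)
  finally show ?thesis .
qed

lemma conj_prod3:
  assumes c: "g \<in> carrier G" "a \<in> carrier G" "b \<in> carrier G" "c \<in> carrier G"
    and e: "a \<otimes> b \<otimes> c = \<one>"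
  shows "(g \<otimes> a \<otimes> inv g) \<otimes> (g \<otimes> b \<otimes> inv g) \<otimes> (g \<otimes> c \<otimes> inv g) = \<one>"
proof -
  have "(g \<otimes> a \<otimes> inv g) \<otimes> (g \<otimes> b \<otimes> inv g) \<otimes> (g \<otimes> c \<otimes> inv g) = g \<otimes> (a \<otimes> b \<otimes> c) \<otimes> inv g"
    using c by (simp add: m_assoc)
  also have "\<dots> = \<one>" using c e by simp
  finally show ?thesis .
qed

lemma inv_of_prod1:
  assumes "a \<otimes> b = \<one>" "a \<in> carrier G" "b \<in> carrier G"
  shows "a = inv b"
  using assms inv_equality by auto

lemma inv_of_prod2:
  assumes "a \<otimes> b = \<one>" "a \<in> carrier G" "b \<in> carrier G"
  shows "b = inv a"
  using assms inv_equality inv_comm by auto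

lemma inv_comm':
  assumes "x \<otimes> y = \<one>" "x \<in> carrier G" "y \<in> carrier G"
  shows "y \<otimes> x = \<one>"
  using assms inv_comm by auto

lemma inv_conj:
  assumes c: "g \<in> carrier G" "a \<in> carrier G"
  shows "inv (g \<otimes> a \<otimes> inv g) = g \<otimes> inv a \<otimes> inv g"
proof -
  have h: "(g \<otimes> inv a \<otimes> inv g) \<otimes> (g \<otimes> a \<otimes> inv g) = \<one>" using c by (simp add: m_assoc)
  show ?thesis by (rule inv_equality[OF h]) (use c in auto)
qed

lemma ttt_cancel:
  assumes "t \<in> carrier G" "z \<in> carrier G" "t \<otimes> t \<otimes> t = \<one>"
  shows "t \<otimes> (t \<otimes> (t \<otimes> z)) = z"
proof -
  have "t \<otimes> (t \<otimes> (t \<otimes> z)) = (t \<otimes> t \<otimes> t) \<otimes> z" using assms(1,2) by (simp add: m_assoc)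
  also have "\<dots> = \<one> \<otimes> z" by (simp only: assms(3))
  also have "\<dots> = z" using assms(2) by simp
  finally show ?thesis .
qed

lemma cube_expand:
  assumes c: "t \<in> carrier G" "w \<in> carrier G"
    and t3: "t [^] (3::nat) = \<one>" and w3: "(w \<otimes> t) [^] (3::nat) = \<one>"
  shows "w \<otimes> (t \<otimes> w \<otimes> inv t) \<otimes> (inv t \<otimes> w \<otimes> t) = \<one>"
proof -
  have p3: "\<And>u. u \<in> carrier G \<Longrightarrow> u [^] (3::nat) = u \<otimes> u \<otimes> u"
    by (simp add: numeral_3_eq_3)
  have ttt: "t \<otimes> t \<otimes> t = \<one>" using t3 p3[OF c(1)] by simp
  have it: "inv t = t \<otimes> t"
  proof -
    have "(t \<otimes> t) \<otimes> t = \<one>" using ttt .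
    thus ?thesis using c by (intro inv_equality) auto
  qed
  have "w \<otimes> (t \<otimes> w \<otimes> inv t) \<otimes> (inv t \<otimes> w \<otimes> t)
        = w \<otimes> (t \<otimes> (w \<otimes> (t \<otimes> (t \<otimes> (t \<otimes> (t \<otimes> (w \<otimes> t)))))))"
    unfolding it using c by (simp add: m_assoc)
  also have "\<dots> = w \<otimes> (t \<otimes> (w \<otimes> (t \<otimes> (w \<otimes> t))))"
    using c ttt by (simp add: ttt_cancel)
  also have "\<dots> = (w \<otimes> t) [^] (3::nat)" using c by (simp add: p3 m_assoc)
  also have "\<dots> = \<one>" by (rule w3)
  finally show ?thesis .
qed

lemma coset_cube:
  assumes w: "w \<in> carrier G"
    and tm: "t \<in> inv w <# {z \<in> carrier G. z [^] (3::nat) = \<one>}"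
  shows "t \<in> carrier G" "(w \<otimes> t) [^] (3::nat) = \<one>"
proof -
  obtain h where h: "h \<in> carrier G" "h [^] (3::nat) = \<one>" "t = inv w \<otimes> h"
    using tm unfolding l_coset_def by auto
  show "t \<in> carrier G" using h w by simp
  have "w \<otimes> t = h" using h w by (simp add: m_assoc [symmetric])
  thus "(w \<otimes> t) [^] (3::nat) = \<one>" using h by simp
qed

lemma core:
  assumes c: "x \<in> carrier G" "x1 \<in> carrier G" "x2 \<in> carrier G"
             "y \<in> carrier G" "y1 \<in> carrier G" "y2 \<in> carrier G"
  and hy: "y \<otimes> y1 \<otimes> y2 = \<one>"
  and hy': "inv y \<otimes> inv y1 \<otimes> inv y2 = \<one>"
  and hx: "x \<otimes> x1 \<otimes> x2 = \<one>"
  and hyx: "(y \<otimes> x) \<otimes> (y1 \<otimes> x1) \<otimes> (y2 \<otimes> x2) = \<one>"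
  and hxy: "(x \<otimes> y) \<otimes> (x1 \<otimes> y1) \<otimes> (x2 \<otimes> y2) = \<one>"
  and hyxy: "(y \<otimes> x \<otimes> y) \<otimes> (y1 \<otimes> x1 \<otimes> y1) \<otimes> (y2 \<otimes> x2 \<otimes> y2) = \<one>"
  shows "y \<otimes> (x \<otimes> y \<otimes> inv x) = (x \<otimes> y \<otimes> inv x) \<otimes> y"
proof -
  note [simp] = c
  have s1: "y \<otimes> y1 = inv y2" using hy by (rule inv_of_prod1) auto
  have "(inv y \<otimes> inv y1) \<otimes> inv y2 = \<one>" using hy' .
  hence "inv y \<otimes> inv y1 = inv (inv y2)" by (rule inv_of_prod1) auto
  hence "inv (y1 \<otimes> y) = y2" by (simp add: inv_mult_group)
  hence "inv (inv (y1 \<otimes> y)) = inv y2" by simp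
  hence s2: "y1 \<otimes> y = inv y2" by simp
  have yy1: "y \<otimes> y1 = y1 \<otimes> y" using s1 s2 by simp
  have "y \<otimes> (y1 \<otimes> y2) = \<one>" using hy by (simp add: m_assoc)
  hence "(y1 \<otimes> y2) \<otimes> y = \<one>" by (rule inv_comm') auto
  hence s3: "y1 \<otimes> y2 = inv y" by (rule inv_of_prod1) auto
  have y2e: "y2 = inv y \<otimes> inv y1"
  proof -
    have "inv (inv y2) = inv (y1 \<otimes> y)" using s2 by simp
    thus ?thesis by (simp add: inv_mult_group)
  qed
  have y1y2: "y1 \<otimes> y2 = y2 \<otimes> y1"
    using s3 y2e by (simp add: m_assoc)
  have "x2 \<otimes> (x \<otimes> x1) = \<one>" using hx by (rule inv_comm') (auto simp: m_assoc)
  hence qinv: "inv (x \<otimes> x1) = x2" by (rule inv_equality) auto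
  define q where "q = x \<otimes> x1"
  have qc: "q \<in> carrier G" unfolding q_def by simp
  have qi: "inv q = x2" unfolding q_def using qinv .
  define A where "A = x \<otimes> y \<otimes> inv x"
  define B where "B = x \<otimes> y1 \<otimes> inv x"
  define C where "C = x \<otimes> y2 \<otimes> inv x"
  define P where "P = q \<otimes> y \<otimes> inv q"
  define Q where "Q = q \<otimes> y1 \<otimes> inv q"
  define R where "R = q \<otimes> y2 \<otimes> inv q"
  have cc: "A \<in> carrier G" "B \<in> carrier G" "C \<in> carrier G"
           "P \<in> carrier G" "Q \<in> carrier G" "R \<in> carrier G"
    unfolding A_def B_def C_def P_def Q_def R_def using qc by auto
  note [simp] = cc
  have f1: "y \<otimes> B \<otimes> R = \<one>"
  proof -
    have "y \<otimes> B \<otimes> R = (y \<otimes> x) \<otimes> (y1 \<otimes> x1) \<otimes> (y2 \<otimes> x2)"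
      unfolding B_def R_def qi unfolding q_def by (simp add: m_assoc)
    thus ?thesis using hyx by simp
  qed
  have f2: "A \<otimes> Q \<otimes> y2 = \<one>"
  proof -
    have "A \<otimes> Q \<otimes> y2 = (x \<otimes> y) \<otimes> (x1 \<otimes> y1) \<otimes> (x2 \<otimes> y2)"
      unfolding A_def Q_def qi unfolding q_def by (simp add: m_assoc)
    thus ?thesis using hxy by simp
  qed
  have f3: "y \<otimes> inv C \<otimes> inv P \<otimes> y2 = \<one>"
  proof -
    have "(y \<otimes> x \<otimes> y) \<otimes> (y1 \<otimes> x1 \<otimes> y1) \<otimes> (y2 \<otimes> x2 \<otimes> y2)
          = y \<otimes> x \<otimes> (y \<otimes> y1) \<otimes> x1 \<otimes> (y1 \<otimes> y2) \<otimes> x2 \<otimes> y2"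
      by (simp add: m_assoc)
    also have "\<dots> = y \<otimes> x \<otimes> inv y2 \<otimes> x1 \<otimes> inv y \<otimes> x2 \<otimes> y2"
      by (simp only: s1 s3)
    also have "\<dots> = y \<otimes> inv C \<otimes> inv P \<otimes> y2"
    proof -
      have iC: "inv C = x \<otimes> inv y2 \<otimes> inv x" unfolding C_def by (rule inv_conj) auto
      have iP: "inv P = x \<otimes> x1 \<otimes> inv y \<otimes> x2"
      proof -
        have "inv P = q \<otimes> inv y \<otimes> inv q" unfolding P_def using qc by (rule inv_conj) auto
        thus ?thesis unfolding qi unfolding q_def .
      qed
      show ?thesis unfolding iC iP by (simp add: m_assoc)
    qed
    finally show ?thesis using hyxy by simp
  qed
  have AB: "A \<otimes> B = B \<otimes> A" unfolding A_def B_def by (rule conj_comm) (auto simp: yy1)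
  have BC: "B \<otimes> C = C \<otimes> B" unfolding B_def C_def by (rule conj_comm) (auto simp: y1y2)
  have ABC: "A \<otimes> B \<otimes> C = \<one>" unfolding A_def B_def C_def by (rule conj_prod3) (auto simp: hy)
  have QR: "Q \<otimes> R = R \<otimes> Q" unfolding Q_def R_def using qc by (rule conj_comm) (auto simp: y1y2)
  have PQR: "P \<otimes> Q \<otimes> R = \<one>" unfolding P_def Q_def R_def using qc by (rule conj_prod3) (auto simp: hy)
  have e1: "y = inv R \<otimes> inv B"
  proof -
    have "y \<otimes> (B \<otimes> R) = \<one>" using f1 by (simp add: m_assoc)
    hence "y = inv (B \<otimes> R)" by (rule inv_of_prod1) auto
    thus ?thesis by (simp add: inv_mult_group)
  qed
  have e2: "y2 = inv Q \<otimes> inv A"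
  proof -
    have "y2 \<otimes> (A \<otimes> Q) = \<one>" using f2 by (rule inv_comm') auto
    hence "y2 = inv (A \<otimes> Q)" by (rule inv_of_prod1) auto
    thus ?thesis by (simp add: inv_mult_group)
  qed
  have e3: "inv P = Q \<otimes> R"
  proof -
    have "P \<otimes> (Q \<otimes> R) = \<one>" using PQR by (simp add: m_assoc)
    hence "(Q \<otimes> R) \<otimes> P = \<one>" by (rule inv_comm') auto
    thus ?thesis by (rule inv_equality) auto
  qed
  have e4: "C = inv P \<otimes> y2 \<otimes> y"
  proof -
    have "y \<otimes> (inv C \<otimes> inv P \<otimes> y2) = \<one>" using f3 by (simp add: m_assoc)
    hence "(inv C \<otimes> inv P \<otimes> y2) \<otimes> y = \<one>" by (rule inv_comm') auto
    hence "inv C \<otimes> (inv P \<otimes> y2 \<otimes> y) = \<one>" by (simp add: m_assoc)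
    hence "inv P \<otimes> y2 \<otimes> y = inv (inv C)" by (rule inv_of_prod2) auto
    thus ?thesis by simp
  qed
  have e5: "C \<otimes> B = R \<otimes> inv A \<otimes> inv R"
  proof -
    have "C \<otimes> B = Q \<otimes> R \<otimes> (inv Q \<otimes> inv A) \<otimes> (inv R \<otimes> inv B) \<otimes> B"
      using e4 e3 e2 e1 by simp
    also have "\<dots> = (R \<otimes> Q) \<otimes> (inv Q \<otimes> inv A) \<otimes> (inv R \<otimes> inv B) \<otimes> B"
      using QR by simp
    also have "\<dots> = R \<otimes> inv A \<otimes> inv R" by (simp add: m_assoc)
    finally show ?thesis .
  qed
  have e6: "C \<otimes> B = inv A"
  proof -
    have "A \<otimes> (B \<otimes> C) = \<one>" using ABC by (simp add: m_assoc)
    hence "(B \<otimes> C) \<otimes> A = \<one>" by (rule inv_comm') auto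
    hence "B \<otimes> C = inv A" by (rule inv_of_prod1) auto
    thus ?thesis using BC by simp
  qed
  have e7: "R \<otimes> inv A = inv A \<otimes> R"
  proof -
    have "R \<otimes> inv A \<otimes> inv R = inv A" using e5 e6 by simp
    hence "R \<otimes> inv A \<otimes> inv R \<otimes> R = inv A \<otimes> R" by simp
    thus ?thesis by (simp add: m_assoc)
  qed
  have AR: "A \<otimes> R = R \<otimes> A"
  proof -
    have "R \<otimes> inv (inv A) = inv (inv A) \<otimes> R" by (rule cm_inv_right) (auto simp: e7)
    thus ?thesis by simp
  qed
  have A_iR: "A \<otimes> inv R = inv R \<otimes> A" by (rule cm_inv_right) (auto simp: AR)
  have A_iB: "A \<otimes> inv B = inv B \<otimes> A" by (rule cm_inv_right) (auto simp: AB)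
  have "A \<otimes> (inv R \<otimes> inv B) = (inv R \<otimes> inv B) \<otimes> A"
    by (rule cm_mult_right) (auto simp: A_iR A_iB)
  hence "A \<otimes> y = y \<otimes> A" using e1 by simp
  thus ?thesis unfolding A_def by simp
qed

end

lemma (in group) engel_conj:
  assumes x: "x \<in> carrier G" and y: "y \<in> carrier G"
    and lg: "k_large 7 G {z \<in> carrier G. z [^] (3::nat) = \<one>}"
  shows "y \<otimes> (inv x \<otimes> y \<otimes> x) = (inv x \<otimes> y \<otimes> x) \<otimes> y"
proof -
  define a where "a = inv x"
  have ac: "a \<in> carrier G" unfolding a_def using x by simp
  define X where "X = {z \<in> carrier G. z [^] (3::nat) = \<one>}"
  define w :: "nat \<Rightarrow> 'a" where "w i = (if i = 0 then \<one> else if i = 1 then y else if i = 2 then inv y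
      else if i = 3 then a else if i = 4 then y \<otimes> a else if i = 5 then a \<otimes> y else y \<otimes> a \<otimes> y)" for i
  have wc: "w i \<in> carrier G" for i unfolding w_def using y ac by auto
  have H: "\<forall>g. (\<forall>i::nat<7. g i \<in> carrier G) \<longrightarrow> (\<Inter>i<7. g i <# X) \<noteq> {}"
    using lg unfolding k_large_def X_def .
  have "(\<Inter>i<7. inv (w i) <# X) \<noteq> {}"
  proof (rule mp[OF spec[OF H, of "\<lambda>i. inv (w i)"]])
    show "\<forall>i<7. inv (w i) \<in> carrier G" using wc by simp
  qed
  then obtain t where t: "t \<in> (\<Inter>i<7. inv (w i) <# X)" by blast
  have tm: "t \<in> inv (w i) <# X" if "i < 7" for i using t that by blast
  have cube: "(w i \<otimes> t) [^] (3::nat) = \<one>" if "i < 7" for i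
    using coset_cube[OF wc tm[OF that, unfolded X_def]] by simp
  have tc: "t \<in> carrier G" using coset_cube[OF wc tm[of 0, unfolded X_def]] by simp
  have N: "w i \<otimes> (t \<otimes> w i \<otimes> inv t) \<otimes> (inv t \<otimes> w i \<otimes> t) = \<one>" if "i < 7" for i
  proof (rule cube_expand[OF tc wc])
    show "t [^] (3::nat) = \<one>" using cube[of 0] unfolding w_def using tc by simp
    show "(w i \<otimes> t) [^] (3::nat) = \<one>" using cube[OF that] .
  qed
  define y1 where "y1 = t \<otimes> y \<otimes> inv t"
  define y2 where "y2 = inv t \<otimes> y \<otimes> t"
  define x1 where "x1 = t \<otimes> a \<otimes> inv t"
  define x2 where "x2 = inv t \<otimes> a \<otimes> t"
  have cc: "y1 \<in> carrier G" "y2 \<in> carrier G" "x1 \<in> carrier G" "x2 \<in> carrier G"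
    unfolding y1_def y2_def x1_def x2_def using tc y ac by auto
  have hy: "y \<otimes> y1 \<otimes> y2 = \<one>"
    using N[of 1] unfolding w_def y1_def y2_def by simp
  have hy': "inv y \<otimes> inv y1 \<otimes> inv y2 = \<one>"
  proof -
    have i1: "inv y1 = t \<otimes> inv y \<otimes> inv t" unfolding y1_def using tc y by (rule inv_conj)
    have i2: "inv y2 = inv t \<otimes> inv y \<otimes> t"
    proof -
      have e: "y2 = inv t \<otimes> y \<otimes> inv (inv t)" unfolding y2_def using tc by simp
      have "inv y2 = inv t \<otimes> inv y \<otimes> inv (inv t)" unfolding e
        by (rule inv_conj) (use tc y in auto)
      thus ?thesis using tc by simp
    qed
    show ?thesis unfolding i1 i2 using N[of 2] unfolding w_def by simp
  qed
  have hx: "a \<otimes> x1 \<otimes> x2 = \<one>"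
    using N[of 3] unfolding w_def x1_def x2_def by simp
  have hyx: "(y \<otimes> a) \<otimes> (y1 \<otimes> x1) \<otimes> (y2 \<otimes> x2) = \<one>"
  proof -
    have "(y \<otimes> a) \<otimes> (y1 \<otimes> x1) \<otimes> (y2 \<otimes> x2)
        = w 4 \<otimes> (t \<otimes> w 4 \<otimes> inv t) \<otimes> (inv t \<otimes> w 4 \<otimes> t)"
      unfolding w_def y1_def y2_def x1_def x2_def using tc y ac by (simp add: m_assoc)
    thus ?thesis using N[of 4] by simp
  qed
  have hxy: "(a \<otimes> y) \<otimes> (x1 \<otimes> y1) \<otimes> (x2 \<otimes> y2) = \<one>"
  proof -
    have "(a \<otimes> y) \<otimes> (x1 \<otimes> y1) \<otimes> (x2 \<otimes> y2)
        = w 5 \<otimes> (t \<otimes> w 5 \<otimes> inv t) \<otimes> (inv t \<otimes> w 5 \<otimes> t)"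
      unfolding w_def y1_def y2_def x1_def x2_def using tc y ac by (simp add: m_assoc)
    thus ?thesis using N[of 5] by simp
  qed
  have hyxy: "(y \<otimes> a \<otimes> y) \<otimes> (y1 \<otimes> x1 \<otimes> y1) \<otimes> (y2 \<otimes> x2 \<otimes> y2) = \<one>"
  proof -
    have "(y \<otimes> a \<otimes> y) \<otimes> (y1 \<otimes> x1 \<otimes> y1) \<otimes> (y2 \<otimes> x2 \<otimes> y2)
        = w 6 \<otimes> (t \<otimes> w 6 \<otimes> inv t) \<otimes> (inv t \<otimes> w 6 \<otimes> t)"
      unfolding w_def y1_def y2_def x1_def x2_def using tc y ac by (simp add: m_assoc)
    thus ?thesis using N[of 6] by simp
  qed
  have "y \<otimes> (a \<otimes> y \<otimes> inv a) = (a \<otimes> y \<otimes> inv a) \<otimes> y"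
    by (rule core[OF ac cc(3) cc(4) y cc(1) cc(2) hy hy' hx hyx hxy hyxy])
  thus ?thesis unfolding a_def using x by simp
qed

lemma (in group) engel_final:
  assumes x: "x \<in> carrier G" and y: "y \<in> carrier G"
    and lg: "k_large 7 G {z \<in> carrier G. z [^] (3::nat) = \<one>}"
  shows "comm3 G x y y = \<one>"
proof -
  define D where "D = inv x \<otimes> y \<otimes> x"
  have Dc: "D \<in> carrier G" unfolding D_def using x y by simp
  have Dy: "D \<otimes> y = y \<otimes> D" unfolding D_def using engel_conj[OF x y lg] by simp
  have iD: "inv D = inv x \<otimes> inv y \<otimes> x"
  proof -
    have e: "D = inv x \<otimes> y \<otimes> inv (inv x)" unfolding D_def using x by simp
    have "inv D = inv x \<otimes> inv y \<otimes> inv (inv x)" unfolding e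
      by (rule inv_conj) (use x y in auto)
    thus ?thesis using x by simp
  qed
  obtain c where c_def: "c = inv x \<otimes> inv y \<otimes> x \<otimes> y" by blast
  have cxy: "comm G x y = c" unfolding comm_def c_def by simp
  have c_eq: "c = inv D \<otimes> y" unfolding c_def iD by simp
  have cc: "c \<in> carrier G" unfolding c_eq using Dc y by simp
  have yiD: "y \<otimes> inv D = inv D \<otimes> y" by (rule cm_inv_right) (use y Dc Dy in auto)
  have cy: "c \<otimes> y = y \<otimes> c"
  proof -
    have "y \<otimes> c = (y \<otimes> inv D) \<otimes> y" unfolding c_eq using y Dc by (simp add: m_assoc)
    also have "\<dots> = (inv D \<otimes> y) \<otimes> y" using yiD by simp
    also have "\<dots> = c \<otimes> y" unfolding c_eq ..
    finally show ?thesis by simp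
  qed
  have "comm G c y = inv c \<otimes> (inv y \<otimes> (c \<otimes> y))" unfolding comm_def using cc y by (simp add: m_assoc)
  also have "\<dots> = inv c \<otimes> (inv y \<otimes> (y \<otimes> c))" using cy by simp
  also have "\<dots> = \<one>" using cc y by simp
  finally show ?thesis unfolding comm3_def cxy .
qed

theorem theorem4p3:
  fixes G :: "('a, 'b) monoid_scheme"
  assumes "group G"
    and "k_large 7 G {x \<in> carrier G. x [^]\<^bsub>G\<^esub> (3::nat) = \<one>\<^bsub>G\<^esub>}"
  shows "two_engel G"
  unfolding two_engel_def
  using group.engel_final[OF assms(1) _ _ assms(2)] by blast

end
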